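(* Let $p$ be a prime, $\alpha_1,\dots,\alpha_n,\beta\ge1$, and let $f:\mathbb{Z}_{p^{\alpha_1}}\times\cdots\times\mathbb{Z}_{p^{\alpha_n}}\to\mathbb{Z}_{p^\beta}$ be any map. Put $d_j:=p^{\alpha_j}-1+(\beta-1)(p-1)p^{\alpha_j-1}$ and $[d]:=\{0,\dots,d_1\}\times\cdots\times\{0,\dots,d_n\}$. Then the polyfract $$P=\sum_{\delta\in[d]}P_\delta\prod_{j=1}^n\binom{X_j}{\delta_j},\qquad P_\delta:=\sum_{x\in\mathbb{Z}_{p^{\alpha_1}}\times\cdots\times\mathbb{Z}_{p^{\alpha_n}}}\binom{\delta_1}{\delta_1-x_1}_{p^{\alpha_1},p^\beta}\cdots\binom{\delta_n}{\delta_n-x_n}_{p^{\alpha_n},p^\beta}f(x),$$ is $(p^{\alpha_1},\dots,p^{\alpha_n})$-periodic and interpolates $f$: $P(x)=f(x)$ for all $x\in\mathbb{Z}_{p^{\alpha_1}}\times\cdots\times\mathbb{Z}_{p^{\alpha_n}}$.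
   Context: $\mathbb{Z}_r=\mathbb{Z}/r\mathbb{Z}$; $\binom{X}{\delta}=X(X-1)\cdots(X-\delta+1)/\delta!$, $\binom{X}{0}=1$. For integers $d\ge0$, $q\ge1$, $r\ge0$ and a residue class $x\in\mathbb{Z}_q$, the co-monofract value is $\binom{d}{x}_{q}:=\sum_{\hat x\in x,\ \hat x\ge0}(-1)^{\hat x}\binom{d}{\hat x}\in\mathbb{Z}$ (only $\hat x\le d$ contribute) and $\binom{d}{x}_{q,r}:=\binom{d}{x}_q+r\mathbb{Z}\in\mathbb{Z}_r$; here $\delta_j-x_j$ denotes the residue class $\delta_j+\mathbb{Z}_{p^{\alpha_j}}$-difference in $\mathbb{Z}_{p^{\alpha_j}}$. A polyfract $P$ is evaluated at $x\in\mathbb{Z}^n$ by $P(x)=\sum_\delta(\prod_j\binom{x_j}{\delta_j})P_\delta\in\mathbb{Z}_{p^\beta}$; being periodic, it induces a map on $\mathbb{Z}_{p^{\alpha_1}}\times\cdots\times\mathbb{Z}_{p^{\alpha_n}}$. *)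

theory Defs
  imports "HOL-Computational_Algebra.Primes" "HOL-Number_Theory.Cong" "HOL-Library.FuncSet"
begin

definition comono :: "nat \<Rightarrow> int \<Rightarrow> nat \<Rightarrow> int" where
  "comono d c q = (\<Sum>k\<in>{k. k \<le> d \<and> [int k = c] (mod int q)}. (-1)^k * int (d choose k))"

text \<open>Binomial of an integer: X(X-1)...(X-k+1)/k! (exact division).\<close>
definition int_binom :: "int \<Rightarrow> nat \<Rightarrow> int" where
  "int_binom X k = (\<Prod>i<k. X - int i) div fact k"

definition polyfract_eval :: "nat \<Rightarrow> (nat \<Rightarrow> nat) \<Rightarrow> ((nat \<Rightarrow> nat) \<Rightarrow> int) \<Rightarrow> (nat \<Rightarrow> int) \<Rightarrow> int" where
  "polyfract_eval n D coef x =
     (\<Sum>\<delta>\<in>PiE {..<n} (\<lambda>j. {0..D j}). (\<Prod>j<n. int_binom (x j) (\<delta> j)) * coef \<delta>)"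

text \<open>The coefficient P_delta (as an integer representative in 0..p^beta-1).
  Elements of Z_{p^alpha_j} are represented by 0..p^alpha_j-1.\<close>
definition interp_coef :: "nat \<Rightarrow> (nat \<Rightarrow> nat) \<Rightarrow> nat \<Rightarrow> nat \<Rightarrow> ((nat \<Rightarrow> nat) \<Rightarrow> int) \<Rightarrow> (nat \<Rightarrow> nat) \<Rightarrow> int" where
  "interp_coef p \<alpha> \<beta> n f \<delta> =
     (\<Sum>x\<in>PiE {..<n} (\<lambda>j. {..<p ^ \<alpha> j}).
        (\<Prod>j<n. comono (\<delta> j) (int (\<delta> j) - int (x j)) (p ^ \<alpha> j)) * f x) mod (int p ^ \<beta>)"

end

theory Submission
  imports Defs "HOL-Computational_Algebra.Polynomial"
begin



definition pc :: "nat \<Rightarrow> 'a::comm_ring_1 \<Rightarrow> 'a \<Rightarrow> bool" where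
  "pc p a b \<longleftrightarrow> (\<exists>D. a = b + of_nat p * D)"

lemma pc_refl: "pc p a a" unfolding pc_def by (rule exI[of _ 0]) simp

lemma pc_sym: "pc p a b \<Longrightarrow> pc p b a"
proof -
  assume "pc p a b"
  then obtain D where "a = b + of_nat p * D" unfolding pc_def by blast
  then have "b = a + of_nat p * (- D)" by simp
  then show ?thesis unfolding pc_def by blast
qed

lemma pc_trans: "pc p a b \<Longrightarrow> pc p b c \<Longrightarrow> pc p a c"
proof -
  assume "pc p a b" "pc p b c"
  then obtain D1 D2 where "a = b + of_nat p * D1" "b = c + of_nat p * D2" unfolding pc_def by blast
  then have "a = c + of_nat p * (D1 + D2)" by (simp add: algebra_simps)
  then show ?thesis unfolding pc_def by blast
qed

lemma pc_add: "pc p a b \<Longrightarrow> pc p c e \<Longrightarrow> pc p (a + c) (b + e)"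
proof -
  assume "pc p a b" "pc p c e"
  then obtain D1 D2 where "a = b + of_nat p * D1" "c = e + of_nat p * D2" unfolding pc_def by blast
  then have "a + c = (b + e) + of_nat p * (D1 + D2)" by (simp add: algebra_simps)
  then show ?thesis unfolding pc_def by blast
qed

lemma pc_mult: "pc p a b \<Longrightarrow> pc p c e \<Longrightarrow> pc p (a * c) (b * e)"
proof -
  assume "pc p a b" "pc p c e"
  then obtain D1 D2 where "a = b + of_nat p * D1" "c = e + of_nat p * D2" unfolding pc_def by blast
  then have "a * c = b * e + of_nat p * (D1 * e + b * D2 + of_nat p * D1 * D2)"
    by (simp add: algebra_simps)
  then show ?thesis unfolding pc_def by blast
qed

lemma pc_pow: "pc p a b \<Longrightarrow> pc p (a ^ n) (b ^ n)"
  by (induction n) (auto simp: pc_refl pc_mult)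

lemma pc_sum: "finite A \<Longrightarrow> (\<And>i. i \<in> A \<Longrightarrow> pc p (f i) (g i)) \<Longrightarrow> pc p (sum f A) (sum g A)"
  by (induction A rule: finite_induct) (auto simp: pc_refl pc_add)

lemma pc_of_int: "[a = b] (mod int p) \<Longrightarrow> pc p (of_int a :: 'a::comm_ring_1) (of_int b)"
proof -
  assume "[a = b] (mod int p)"
  then obtain k where "a = b + int p * k" by (metis cong_iff_lin cong_sym)
  then have "(of_int a :: 'a) = of_int b + of_nat p * of_int k" by simp
  then show ?thesis unfolding pc_def by blast
qed

lemma pc_mult_p: "pc p (of_nat p * a) 0"
  unfolding pc_def by auto

lemma pow_split: "\<exists>M. (a + b) ^ n = b ^ n + a * (M::'a::comm_ring_1)"
proof (induction n)
  case 0 then show ?case by (auto intro: exI[of _ 0])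
next
  case (Suc n)
  then obtain M where "(a + b) ^ n = b ^ n + a * M" by blast
  then have "(a + b) ^ Suc n = b ^ Suc n + a * (b ^ n + M * (a + b))"
    by (simp add: algebra_simps)
  then show ?case by blast
qed

lemma frob_add:
  assumes "prime p"
  shows "pc p ((a + b) ^ p) (a ^ p + (b::'a::comm_ring_1) ^ p)"
proof -
  have p0: "p > 0" using assms prime_gt_0_nat by blast
  have "(a + b) ^ p = (\<Sum>k\<le>p. of_nat (p choose k) * a ^ k * b ^ (p - k))"
    by (rule binomial_ring)
  also have "{..p} = insert 0 (insert p {1..<p})" using p0 by auto
  also have "(\<Sum>k\<in>insert 0 (insert p {1..<p}). of_nat (p choose k) * a ^ k * b ^ (p - k))
      = b ^ p + (a ^ p + (\<Sum>k\<in>{1..<p}. of_nat (p choose k) * a ^ k * b ^ (p - k)))"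
    using p0 by simp
  finally have eq: "(a + b) ^ p = b ^ p + (a ^ p + (\<Sum>k\<in>{1..<p}. of_nat (p choose k) * a ^ k * b ^ (p - k)))" .
  have "pc p (\<Sum>k\<in>{1..<p}. of_nat (p choose k) * a ^ k * b ^ (p - k)) (\<Sum>k\<in>{1..<p}. 0)"
  proof (rule pc_sum)
    fix k assume k: "k \<in> {1..<p}"
    then have "p dvd (p choose k)" using dvd_choose_prime[of k p] assms by auto
    then obtain t where "p choose k = p * t" by blast
    then show "pc p (of_nat (p choose k) * a ^ k * b ^ (p - k)) 0"
      unfolding pc_def by (auto intro: exI[of _ "of_nat t * a ^ k * b ^ (p - k)"] simp: algebra_simps)
  qed simp
  then have "pc p (b ^ p + (a ^ p + (\<Sum>k\<in>{1..<p}. of_nat (p choose k) * a ^ k * b ^ (p - k)))) (b ^ p + (a ^ p + 0))"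
    by (intro pc_add pc_refl) simp
  then show ?thesis using eq by (simp add: add.commute)
qed

lemma pc_minus_one_pow:
  assumes "prime p" shows "pc p ((-1::'a::comm_ring_1) ^ p) (-1)"
proof (cases "p = 2")
  case True
  then show ?thesis unfolding pc_def by (auto intro: exI[of _ 1])
next
  case False
  then have "p > 2" using assms prime_ge_2_nat[of p] by linarith
  then have "odd p" using assms prime_odd_nat by simp
  then show ?thesis by (simp add: pc_refl)
qed

lemma frob:
  assumes "prime p"
  shows "pc p ((x - 1) ^ (p ^ j)) ((x::'a::comm_ring_1) ^ (p ^ j) - 1)"
proof (induction j)
  case 0 then show ?case by (simp add: pc_refl)
next
  case (Suc j)
  have e1: "(x - 1) ^ (p ^ Suc j) = ((x - 1) ^ (p ^ j)) ^ p"
    by (simp only: power_Suc2 power_mult)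
  have a: "pc p (((x - 1) ^ (p ^ j)) ^ p) ((x ^ (p ^ j) + (-1)) ^ p)"
    using pc_pow[OF Suc] by simp
  have b: "pc p ((x ^ (p ^ j) + (-1)) ^ p) ((x ^ (p ^ j)) ^ p + (-1) ^ p)"
    by (rule frob_add[OF assms])
  have c: "pc p ((x ^ (p ^ j)) ^ p + (-1) ^ p) ((x ^ (p ^ j)) ^ p + (-1))"
    by (intro pc_add pc_refl pc_minus_one_pow assms)
  have e2: "(x ^ (p ^ j)) ^ p = x ^ (p ^ Suc j)"
    by (simp only: power_Suc2 power_mult)
  have "pc p ((x - 1) ^ (p ^ Suc j)) (x ^ (p ^ Suc j) + (-1))"
    using pc_trans[OF pc_trans[OF a b] c] unfolding e1 e2 .
  then show ?case by simp
qed




lemma choose_pm1: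
  assumes "prime p" "k < p"
  shows "[int (p - 1 choose k) = (-1) ^ k] (mod int p)"
  using assms(2)
proof (induction k)
  case 0 then show ?case by simp
next
  case (Suc k)
  have p0: "p > 0" using assms(1) prime_gt_0_nat by blast
  have "p choose Suc k = (p - 1 choose k) + (p - 1 choose Suc k)"
    using p0 binomial_Suc_Suc[of "p - 1" k] by simp
  moreover have "p dvd (p choose Suc k)" using dvd_choose_prime[of "Suc k" p] assms(1) Suc.prems by auto
  ultimately have "[int (p - 1 choose k) + int (p - 1 choose Suc k) = 0] (mod int p)"
    by (metis cong_0_iff int_dvd_int_iff of_nat_add)
  moreover have "[int (p - 1 choose k) = (-1) ^ k] (mod int p)" using Suc by simp
  ultimately have "[(-1) ^ k + int (p - 1 choose Suc k) = 0] (mod int p)"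
    by (metis cong_add_rcancel cong_sym cong_trans)
  then have "[int (p - 1 choose Suc k) = - ((-1) ^ k)] (mod int p)"
    by (metis add.commute add_diff_cancel_right' cong_diff cong_refl diff_0)
  then show ?case by simp
qed

lemma minus_one_pow_pm1:
  assumes "prime p" shows "[(-1::int) ^ (p - 1) = 1] (mod int p)"
proof (cases "p = 2")
  case True then show ?thesis by (simp add: cong_def)
next
  case False
  then have "p > 2" using assms prime_ge_2_nat[of p] by linarith
  then have "odd p" using assms prime_odd_nat by simp
  then have "even (p - 1)" by simp
  then show ?thesis by simp
qed

lemma phi_lemma:
  assumes "prime p"
  shows "pc p ((y - 1) ^ (p - 1)) (\<Sum>j<p. (y::'a::comm_ring_1) ^ j)"
proof -
  have p0: "p > 0" using assms prime_gt_0_nat by blast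
  have "(y - 1) ^ (p - 1) = (y + (-1)) ^ (p - 1)" by simp
  also have "\<dots> = (\<Sum>k\<le>p - 1. of_nat (p - 1 choose k) * y ^ k * (-1) ^ (p - 1 - k))"
    by (rule binomial_ring)
  also have "{..p - 1} = {..<p}" using p0 by auto
  finally have eq: "(y - 1) ^ (p - 1) = (\<Sum>k<p. of_nat (p - 1 choose k) * y ^ k * (-1) ^ (p - 1 - k))" .
  have "pc p (\<Sum>k<p. of_nat (p - 1 choose k) * y ^ k * (-1) ^ (p - 1 - k)) (\<Sum>k<p. y ^ k)"
  proof (rule pc_sum)
    fix k assume k: "k \<in> {..<p}"
    have "[int (p - 1 choose k) * (-1) ^ (p - 1 - k) = (-1) ^ k * (-1) ^ (p - 1 - k)] (mod int p)"
      using choose_pm1[OF assms, of k] k by (intro cong_mult cong_refl) auto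
    moreover have "(-1::int) ^ k * (-1) ^ (p - 1 - k) = (-1) ^ (p - 1)"
      using k by (simp flip: power_add)
    ultimately have "[int (p - 1 choose k) * (-1) ^ (p - 1 - k) = 1] (mod int p)"
      using minus_one_pow_pm1[OF assms] by (metis cong_trans)
    then have "pc p (of_int (int (p - 1 choose k) * (-1) ^ (p - 1 - k)) :: 'a) (of_int 1)"
      by (rule pc_of_int)
    then have "pc p (of_nat (p - 1 choose k) * (-1) ^ (p - 1 - k) :: 'a) 1" by simp
    then have "pc p (of_nat (p - 1 choose k) * (-1) ^ (p - 1 - k) * y ^ k) (1 * y ^ k)"
      by (intro pc_mult pc_refl)
    then show "pc p (of_nat (p - 1 choose k) * y ^ k * (-1) ^ (p - 1 - k)) (y ^ k)"
      by (simp add: ac_simps)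
  qed simp
  then show ?thesis using eq by simp
qed

definition J :: "nat \<Rightarrow> nat \<Rightarrow> 'a::comm_ring_1 \<Rightarrow> 'a \<Rightarrow> bool" where
  "J p k w a \<longleftrightarrow> (\<exists>b c. a = of_nat p ^ k * b + w * c)"

lemma J_add: "J p k w a \<Longrightarrow> J p k w e \<Longrightarrow> J p k w (a + e)"
proof -
  assume "J p k w a" "J p k w e"
  then obtain b1 c1 b2 c2 where "a = of_nat p ^ k * b1 + w * c1" "e = of_nat p ^ k * b2 + w * c2"
    unfolding J_def by blast
  then have "a + e = of_nat p ^ k * (b1 + b2) + w * (c1 + c2)" by (simp add: algebra_simps)
  then show ?thesis unfolding J_def by blast
qed

lemma J_mult: "J p k w a \<Longrightarrow> J p k w (a * e)"
proof -
  assume "J p k w a"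
  then obtain b1 c1 where "a = of_nat p ^ k * b1 + w * c1" unfolding J_def by blast
  then have "a * e = of_nat p ^ k * (b1 * e) + w * (c1 * e)" by (simp add: algebra_simps)
  then show ?thesis unfolding J_def by blast
qed

lemma J_mult': "J p k w a \<Longrightarrow> J p k w (e * a)"
  using J_mult[of p k w a e] by (simp add: mult.commute)

lemma J_pmult: "J p k w a \<Longrightarrow> J p (k + m) w (of_nat p ^ m * a)"
proof -
  assume "J p k w a"
  then obtain b1 c1 where "a = of_nat p ^ k * b1 + w * c1" unfolding J_def by blast
  then have "of_nat p ^ m * a = of_nat p ^ (k + m) * b1 + w * (of_nat p ^ m * c1)"
    by (simp add: algebra_simps power_add)
  then show ?thesis unfolding J_def by blast
qed

lemma J_w: "J p k w (w * c)"
  unfolding J_def by (rule exI[of _ 0], rule exI[of _ c]) simp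

lemma J_p: "J p k w (of_nat p ^ k * b)"
  unfolding J_def by (rule exI[of _ b], rule exI[of _ 0]) simp

lemma J_mono: "m \<le> k \<Longrightarrow> J p k w a \<Longrightarrow> J p m w a"
proof -
  assume "m \<le> k" "J p k w a"
  then obtain b1 c1 where "a = of_nat p ^ k * b1 + w * c1" unfolding J_def by blast
  moreover have "(of_nat p ^ k :: 'a) = of_nat p ^ m * of_nat p ^ (k - m)"
    using \<open>m \<le> k\<close> by (simp flip: power_add)
  ultimately have "a = of_nat p ^ m * (of_nat p ^ (k - m) * b1) + w * c1" by (simp add: ac_simps)
  then show ?thesis unfolding J_def by blast
qed

lemma J_of_pc: "pc p a w \<Longrightarrow> J p 1 w a"
proof -
  assume "pc p a w"
  then obtain D where "a = w + of_nat p * D" unfolding pc_def by blast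
  then have "a = of_nat p ^ 1 * D + w * 1" by simp
  then show ?thesis unfolding J_def by blast
qed




lemma phi_absorb:
  fixes y w :: "'a::comm_ring_1"
  assumes vw: "(y - 1) * Phi = w"
  shows "\<exists>E. y ^ n * Phi = Phi + w * E"
proof (induction n)
  case 0 then show ?case by (auto intro: exI[of _ 0])
next
  case (Suc n)
  then obtain E where E: "y ^ n * Phi = Phi + w * E" by blast
  have "y * Phi = Phi + w" using vw by (simp add: algebra_simps)
  have "y ^ Suc n * Phi = y * (y ^ n * Phi)" by (simp add: ac_simps)
  also have "\<dots> = y * Phi + w * (y * E)" unfolding E by (simp add: algebra_simps)
  also have "\<dots> = Phi + w * (1 + y * E)" unfolding \<open>y * Phi = Phi + w\<close> by (simp add: algebra_simps)
  finally have "y ^ Suc n * Phi = Phi + w * (1 + y * E)" .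
  then show ?case by blast
qed

lemma phi_sq:
  fixes y w :: "'a::comm_ring_1"
  assumes vw: "(y - 1) * Phi = w"
  shows "\<exists>E. (\<Sum>j<n. y ^ j) * Phi = of_nat n * Phi + w * E"
proof (induction n)
  case 0 then show ?case by (auto intro: exI[of _ 0])
next
  case (Suc n)
  then obtain E where E: "(\<Sum>j<n. y ^ j) * Phi = of_nat n * Phi + w * E" by blast
  obtain E' where E': "y ^ n * Phi = Phi + w * E'" using phi_absorb[OF vw] by blast
  have "(\<Sum>j<Suc n. y ^ j) * Phi = (\<Sum>j<n. y ^ j) * Phi + y ^ n * Phi"
    by (simp add: algebra_simps)
  also have "\<dots> = of_nat (Suc n) * Phi + w * (E + E')"
    using E E' by (simp add: algebra_simps)
  finally show ?case by blast
qed

lemma expand_pow: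
  fixes Phi C w P :: "'a::comm_ring_1"
  assumes sq: "Phi * Phi = P * Phi + w * E0"
  shows "\<exists>H E. (Phi + P * C) ^ Suc k = P ^ Suc k * C ^ Suc k + P ^ k * Phi * H + w * E"
proof (induction k)
  case 0 show ?case by (rule exI[of _ 1], rule exI[of _ 0]) simp
next
  case (Suc k)
  then obtain H E where HE: "(Phi + P * C) ^ Suc k = P ^ Suc k * C ^ Suc k + P ^ k * Phi * H + w * E"
    by blast
  have "(Phi + P * C) ^ Suc (Suc k) = (P ^ Suc k * C ^ Suc k + P ^ k * Phi * H + w * E) * (Phi + P * C)"
    using HE by (simp add: mult.commute)
  also have "\<dots> = P ^ Suc (Suc k) * C ^ Suc (Suc k) + P ^ Suc k * C ^ Suc k * Phi
      + P ^ k * (Phi * Phi) * H + P ^ Suc k * Phi * H * C + w * (E * (Phi + P * C))"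
    by (simp add: algebra_simps)
  also have "\<dots> = P ^ Suc (Suc k) * C ^ Suc (Suc k) + P ^ Suc k * Phi * (C ^ Suc k + H + H * C)
      + w * (E * (Phi + P * C) + E0 * P ^ k * H)"
    unfolding sq by (simp add: algebra_simps)
  finally show ?case by blast
qed

theorem ring_main:
  fixes x :: "'a::comm_ring_1"
  assumes p: "prime p" and a: "\<alpha> \<ge> 1"
  shows "J p (Suc k) (x ^ (p ^ \<alpha>) - 1) ((x - 1) ^ (p ^ \<alpha> + k * ((p - 1) * p ^ (\<alpha> - 1))))"
proof -
  define q' where "q' = p ^ (\<alpha> - 1)"
  define q where "q = p ^ \<alpha>"
  define y where "y = x ^ q'"
  define Phi where "Phi = (\<Sum>j<p. y ^ j)"
  define w where "w = x ^ q - 1"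
  define P :: 'a where "P = of_nat p"
  have p2: "p \<ge> 2" using p prime_ge_2_nat by blast
  have qq: "q = q' * p" unfolding q_def q'_def using a
    by (metis Suc_diff_le diff_Suc_1 power_Suc2)
  have vw: "(y - 1) * Phi = w"
    unfolding Phi_def w_def y_def using power_diff_1_eq[of "x ^ q'" p]
    by (simp add: qq power_mult)
  have f1: "pc p ((x - 1) ^ q') (y - 1)" unfolding q'_def y_def by (rule frob[OF p])
  then obtain D where D: "(x - 1) ^ q' = (y - 1) + P * D" unfolding pc_def P_def by blast
  have "pc p (((x - 1) ^ q') ^ (p - 1)) ((y - 1) ^ (p - 1))" by (rule pc_pow[OF f1])
  moreover have "pc p ((y - 1) ^ (p - 1)) Phi" unfolding Phi_def by (rule phi_lemma[OF p])
  ultimately have "pc p (((x - 1) ^ q') ^ (p - 1)) Phi"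
    by (rule pc_trans)
  moreover have "((x - 1) ^ q') ^ (p - 1) = (x - 1) ^ ((p - 1) * q')"
    by (simp add: power_mult mult.commute)
  ultimately have "pc p ((x - 1) ^ ((p - 1) * q')) Phi" by simp
  then obtain C where C: "(x - 1) ^ ((p - 1) * q') = Phi + P * C" unfolding pc_def P_def by blast
  have Jq: "J p 1 w ((x - 1) ^ q)"
    unfolding w_def q_def by (rule J_of_pc, rule frob[OF p])
  obtain M where M: "(y - 1 + P * D) ^ p = (P * D) ^ p + (y - 1) * M"
    using pow_split by blast
  have "(x - 1) ^ q = ((x - 1) ^ q') ^ p" by (simp add: qq power_mult)
  also have "\<dots> = (P * D) ^ p + (y - 1) * M" using M D by simp
  finally have "(x - 1) ^ q * Phi = ((P * D) ^ p + (y - 1) * M) * Phi" by simp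
  also have "\<dots> = (P * D) ^ p * Phi + ((y - 1) * Phi) * M" by (simp add: algebra_simps)
  also have "\<dots> = (P * D) ^ p * Phi + w * M" using vw by (simp add: ac_simps)
  also have "\<dots> = of_nat p ^ p * (D ^ p * Phi) + w * M"
    by (simp add: P_def power_mult_distrib)
  finally have eqJ: "(x - 1) ^ q * Phi = of_nat p ^ p * (D ^ p * Phi) + w * M" .
  have "J p p w (of_nat p ^ p * (D ^ p * Phi) + w * M)" by (intro J_add J_p J_w)
  then have "J p p w ((x - 1) ^ q * Phi)" unfolding eqJ .
  then have JqPhi: "J p 2 w ((x - 1) ^ q * Phi)" using J_mono p2 by blast
  show ?thesis
  proof (cases k)
    case 0 then show ?thesis using Jq unfolding q_def w_def by simp
  next
    case (Suc k')
    obtain E0 where E0: "Phi * Phi = of_nat p * Phi + w * E0"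
      using phi_sq[OF vw, of p] unfolding Phi_def by blast
    obtain H E where HE: "(Phi + P * C) ^ Suc k' = P ^ Suc k' * C ^ Suc k' + P ^ k' * Phi * H + w * E"
      using expand_pow[of Phi P w E0 C k'] E0 unfolding P_def by blast
    have pm: "(x - 1) ^ (k * ((p - 1) * q')) = ((x - 1) ^ ((p - 1) * q')) ^ k"
      by (subst mult.commute) (rule power_mult)
    have "(x - 1) ^ (q + k * ((p - 1) * q')) = (x - 1) ^ q * ((x - 1) ^ ((p - 1) * q')) ^ k"
      by (simp only: power_add pm)
    also have "\<dots> = (x - 1) ^ q * (Phi + P * C) ^ Suc k'" using C Suc by simp
    also have "\<dots> = (x - 1) ^ q * (P ^ Suc k' * C ^ Suc k' + P ^ k' * Phi * H + w * E)"
      by (simp only: HE)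
    also have "\<dots> = of_nat p ^ Suc k' * (x - 1) ^ q * C ^ Suc k'
       + of_nat p ^ k' * ((x - 1) ^ q * Phi) * H + w * ((x - 1) ^ q * E)"
      unfolding P_def by (simp only: algebra_simps)
    finally have eq: "(x - 1) ^ (q + k * ((p - 1) * q')) = \<dots>" .
    have t1: "J p (1 + Suc k') w (of_nat p ^ Suc k' * (x - 1) ^ q * C ^ Suc k')"
      using J_mult[OF J_pmult[OF Jq, of "Suc k'"]] by (simp add: mult.assoc)
    have t2: "J p (2 + k') w (of_nat p ^ k' * ((x - 1) ^ q * Phi) * H)"
      using J_mult[OF J_pmult[OF JqPhi, of k']] by simp
    have "J p (Suc k) w ((x - 1) ^ (q + k * ((p - 1) * q')))"
      unfolding eq using Suc t1 t2 by (intro J_add J_w) simp_all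
    then show ?thesis unfolding q_def q'_def w_def .
  qed
qed

corollary ring_cor:
  fixes x :: "'a::comm_ring_1"
  assumes p: "prime p" and a: "\<alpha> \<ge> 1" and n: "n \<ge> p ^ \<alpha> + k * ((p - 1) * p ^ (\<alpha> - 1))"
  shows "J p (Suc k) (x ^ (p ^ \<alpha>) - 1) ((x - 1) ^ n)"
proof -
  have "(x - 1) ^ n = (x - 1) ^ (p ^ \<alpha> + k * ((p - 1) * p ^ (\<alpha> - 1))) * (x - 1) ^ (n - (p ^ \<alpha> + k * ((p - 1) * p ^ (\<alpha> - 1))))"
    using n by (simp flip: power_add)
  then show ?thesis using J_mult[OF ring_main[OF p a], of k x] by simp
qed




definition G :: "nat \<Rightarrow> (nat \<Rightarrow> int) \<Rightarrow> int poly \<Rightarrow> int" where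
  "G N g a = (\<Sum>m<N. coeff a m * g m)"

definition newt :: "(nat \<Rightarrow> int) \<Rightarrow> nat \<Rightarrow> int" where
  "newt g n = (\<Sum>m\<le>n. (-1) ^ (n - m) * int (n choose m) * g m)"

lemma G_add: "G N g (a + b) = G N g a + G N g b"
  unfolding G_def by (simp add: algebra_simps sum.distrib)

lemma G_diff: "G N g (a - b) = G N g a - G N g b"
  unfolding G_def by (simp add: algebra_simps sum_subtractf)

lemma G_sum: "G N g (sum f A) = (\<Sum>i\<in>A. G N g (f i))"
  unfolding G_def by (simp add: coeff_sum sum_distrib_right sum.swap[of _ A])

lemma G_of_nat_mult: "G N g (of_nat k * a) = int k * G N g a"
proof -
  have "(of_nat k :: int poly) * a = smult (int k) a" by (simp add: of_nat_poly)
  then show ?thesis unfolding G_def by (simp add: sum_distrib_left ac_simps)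
qed

lemma G_monom: "y < N \<Longrightarrow> G N g (monom 1 y) = g y"
proof -
  assume y: "y < N"
  have "G N g (monom 1 y) = (\<Sum>m<N. if m = y then g m else 0)"
    unfolding G_def by (intro sum.cong) (auto simp: coeff_monom)
  also have "\<dots> = g y" using y by (simp add: sum.delta')
  finally show ?thesis .
qed

lemma G_lin_pow:
  assumes "n < N"
  shows "G N g ([:-1, 1:] ^ n) = newt g n"
proof -
  have "G N g ([:-1, 1:] ^ n) = (\<Sum>m\<le>n. coeff ([:-1, 1:] ^ n) m * g m)"
    unfolding G_def
  proof (rule sum.mono_neutral_right)
    show "\<forall>i\<in>{..<N} - {..n}. coeff ([:-1, 1:] ^ n) i * g i = 0"
    proof
      fix i assume "i \<in> {..<N} - {..n}"
      then have "i > degree ([:-1::int, 1:] ^ n)" using degree_linear_power[of "-1::int" n] by auto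
      then show "coeff ([:-1, 1:] ^ n) i * g i = 0" by (simp add: coeff_eq_0)
    qed
  qed (use assms in auto)
  also have "\<dots> = newt g n" unfolding newt_def
    by (intro sum.cong refl) (simp add: coeff_linear_poly_power)
  finally show ?thesis .
qed

lemma newton:
  "g y = (\<Sum>k\<le>y. int (y choose k) * newt g k)"
proof -
  have X: "(monom 1 1 :: int poly) = [:-1, 1:] + 1" by (simp add: monom_Suc one_pCons)
  have "monom (1::int) y = (monom 1 1) ^ y" by (simp add: monom_power)
  also have "\<dots> = ([:-1, 1:] + 1) ^ y" using X by simp
  also have "\<dots> = (\<Sum>k\<le>y. of_nat (y choose k) * [:-1, 1:] ^ k * 1 ^ (y - k))"
    by (rule binomial_ring)
  finally have eq: "monom (1::int) y = (\<Sum>k\<le>y. of_nat (y choose k) * [:-1, 1:] ^ k)" by simp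
  have "g y = G (Suc y) g (monom 1 y)" by (simp add: G_monom)
  also have "\<dots> = (\<Sum>k\<le>y. int (y choose k) * G (Suc y) g ([:-1, 1:] ^ k))"
    unfolding eq G_sum by (simp add: G_of_nat_mult mult.assoc)
  also have "\<dots> = (\<Sum>k\<le>y. int (y choose k) * newt g k)"
    by (intro sum.cong refl) (simp add: G_lin_pow)
  finally show ?thesis .
qed

lemma G_shift:
  assumes per: "\<And>m. g (m + q) = g m" and N: "N \<ge> degree c + q + 1"
  shows "G N g (monom 1 q * c) = G N g c"
proof -
  have "G N g (monom 1 q * c) = (\<Sum>m<N. (if m < q then 0 else coeff c (m - q)) * g m)"
    unfolding G_def by (simp add: coeff_monom_mult cong: if_cong)
  also have "{..<N} = {..<q} \<union> {q..<N}" using N by auto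
  also have "(\<Sum>m\<in>{..<q} \<union> {q..<N}. (if m < q then 0 else coeff c (m - q)) * g m)
     = (\<Sum>m\<in>{q..<N}. coeff c (m - q) * g m)"
    by (subst sum.union_disjoint) auto
  also have "{q..<N} = {0 + q..<(N - q) + q}" using N by simp
  also have "(\<Sum>m\<in>{0 + q..<(N - q) + q}. coeff c (m - q) * g m) = (\<Sum>i\<in>{0..<N - q}. coeff c i * g (i + q))"
    unfolding sum.shift_bounds_nat_ivl by simp
  also have "\<dots> = (\<Sum>i<N - q. coeff c i * g i)" using per by (simp add: atLeast0LessThan)
  also have "\<dots> = G N g c" unfolding G_def
  proof (rule sum.mono_neutral_left)
    show "\<forall>i\<in>{..<N} - {..<N - q}. coeff c i * g i = 0"
      using N by (auto simp: coeff_eq_0)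
  qed auto
  finally show ?thesis .
qed

lemma weis:
  assumes p: "prime p" and a: "\<alpha> \<ge> 1" and n: "n \<ge> p ^ \<alpha> + k * ((p - 1) * p ^ (\<alpha> - 1))"
    and per: "\<And>m. g (m + p ^ \<alpha>) = g m"
  shows "int p ^ Suc k dvd newt g n"
proof -
  have "J p (Suc k) ((monom 1 1) ^ (p ^ \<alpha>) - 1) ((monom (1::int) 1 - 1) ^ n)"
    by (rule ring_cor[OF p a n])
  then obtain b c where bc: "(monom (1::int) 1 - 1) ^ n = of_nat p ^ Suc k * b + ((monom 1 1) ^ (p ^ \<alpha>) - 1) * c"
    unfolding J_def by blast
  have m1: "monom (1::int) 1 - 1 = [:-1, 1:]" by (simp add: monom_Suc one_pCons)
  have m2: "(monom (1::int) 1) ^ (p ^ \<alpha>) = monom 1 (p ^ \<alpha>)" by (simp add: monom_power)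
  define N where "N = n + degree c + p ^ \<alpha> + 1"
  have "newt g n = G N g ([:-1, 1:] ^ n)" using G_lin_pow[of n N g] unfolding N_def by simp
  also have "[:-1, 1:] ^ n = of_nat (p ^ Suc k) * b + (monom 1 (p ^ \<alpha>) * c - c)"
    using bc unfolding m1 m2 by (simp add: algebra_simps of_nat_power)
  also have "G N g (of_nat (p ^ Suc k) * b + (monom 1 (p ^ \<alpha>) * c - c))
     = G N g (of_nat (p ^ Suc k) * b) + (G N g (monom 1 (p ^ \<alpha>) * c) - G N g c)"
    by (simp only: G_add G_diff)
  also have "G N g (monom 1 (p ^ \<alpha>) * c) = G N g c"
    by (rule G_shift[of g "p ^ \<alpha>"]) (simp_all add: per N_def)
  finally have "newt g n = int (p ^ Suc k) * G N g b" by (simp only: G_of_nat_mult)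
  then show ?thesis by simp
qed




lemma int_binom_nat: "int_binom (int y) k = int (y choose k)"
  unfolding int_binom_def int_binomial gbinomial_prod_rev atLeast0LessThan ..

lemma fact_dvd_falling: "fact k dvd (\<Prod>i<k. (X::int) - int i)"
proof -
  have "(\<Prod>i<k. X - int i) = (-1) ^ k * pochhammer (- X) k"
    using falling_fact_pochhammer[of X k] by (simp add: atLeast0LessThan)
  then show ?thesis using fact_dvd_pochhammer[of k "- X"] by simp
qed

lemma int_binom_mult: "int_binom X k * fact k = (\<Prod>i<k. X - int i)"
  unfolding int_binom_def using fact_dvd_falling[of k X] by simp

lemma int_binom_shift:
  assumes "r * fact k dvd M"
  shows "[int_binom (X + M) k = int_binom X k] (mod r)"
proof -
  have "[(\<Prod>i<k. X + M - int i) = (\<Prod>i<k. X - int i)] (mod M)"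
  proof (rule cong_prod)
    fix i show "[X + M - int i = X - int i] (mod M)"
      by (simp add: cong_iff_dvd_diff)
  qed
  then have "[(\<Prod>i<k. X + M - int i) = (\<Prod>i<k. X - int i)] (mod r * fact k)"
    using assms cong_dvd_modulus by blast
  then have "r * fact k dvd int_binom X k * fact k - int_binom (X + M) k * fact k"
    unfolding int_binom_mult cong_iff_dvd_diff by (simp add: dvd_diff_commute)
  then have "fact k * r dvd fact k * (int_binom X k - int_binom (X + M) k)"
    by (simp add: algebra_simps)
  then have "r dvd (int_binom X k - int_binom (X + M) k)"
    by (rule zdvd_mult_cancel) simp
  then show ?thesis by (simp add: cong_iff_dvd_diff dvd_diff_commute)
qed

definition gind :: "nat \<Rightarrow> nat \<Rightarrow> nat \<Rightarrow> int" where
  "gind q c m = (if m mod q = c then 1 else 0)"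

lemma gind_per: "gind q c (m + q) = gind q c m"
  unfolding gind_def by simp

lemma comono_newt:
  assumes c: "c < q"
  shows "comono \<delta> (int \<delta> - int c) q = newt (gind q c) \<delta>"
proof -
  have memb: "[int k = int \<delta> - int c] (mod int q) \<longleftrightarrow> (\<delta> - k) mod q = c" if "k \<le> \<delta>" for k
  proof -
    have "[int k = int \<delta> - int c] (mod int q) \<longleftrightarrow> int q dvd (int k - (int \<delta> - int c))"
      by (simp only: cong_iff_dvd_diff)
    also have "int k - (int \<delta> - int c) = int c - int (\<delta> - k)" using that by simp
    also have "int q dvd (int c - int (\<delta> - k)) \<longleftrightarrow> [int c = int (\<delta> - k)] (mod int q)"
      by (simp only: cong_iff_dvd_diff)
    also have "\<dots> \<longleftrightarrow> [c = \<delta> - k] (mod q)" by (rule cong_int_iff)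
    also have "\<dots> \<longleftrightarrow> (\<delta> - k) mod q = c" using c by (simp add: cong_def eq_commute)
    finally show ?thesis .
  qed
  have "newt (gind q c) \<delta> = (\<Sum>m\<le>\<delta>. if m mod q = c then (-1) ^ (\<delta> - m) * int (\<delta> choose m) else 0)"
    unfolding newt_def gind_def by (intro sum.cong) auto
  also have "\<dots> = (\<Sum>m\<in>{m. m \<le> \<delta> \<and> m mod q = c}. (-1) ^ (\<delta> - m) * int (\<delta> choose m))"
  proof -
    have e: "{m. m \<le> \<delta> \<and> m mod q = c} = {m\<in>{..\<delta>}. m mod q = c}" by auto
    show ?thesis unfolding e by (rule sum.inter_filter[symmetric]) simp
  qed
  also have "\<dots> = comono \<delta> (int \<delta> - int c) q"
    unfolding comono_def
  proof (rule sum.reindex_bij_witness[of _ "\<lambda>k. \<delta> - k" "\<lambda>m. \<delta> - m"])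
    fix m assume m: "m \<in> {m. m \<le> \<delta> \<and> m mod q = c}"
    then show "\<delta> - (\<delta> - m) = m" by simp
    have m1: "m \<le> \<delta>" "m mod q = c" using m by auto
    have "\<delta> - (\<delta> - m) = m" using m1 by simp
    then have "[int (\<delta> - m) = int \<delta> - int c] (mod int q)"
      using memb[of "\<delta> - m"] m1 by simp
    then show "\<delta> - m \<in> {k. k \<le> \<delta> \<and> [int k = int \<delta> - int c] (mod int q)}"
      by simp
  next
    fix k assume k: "k \<in> {k. k \<le> \<delta> \<and> [int k = int \<delta> - int c] (mod int q)}"
    then show "\<delta> - (\<delta> - k) = k" by simp
    have k1: "k \<le> \<delta>" "[int k = int \<delta> - int c] (mod int q)" using k by auto
    have "(\<delta> - k) mod q = c" using memb[OF k1(1)] k1(2) by simp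
    then show "\<delta> - k \<in> {m. m \<le> \<delta> \<and> m mod q = c}" by simp
  next
    fix m assume m: "m \<in> {m. m \<le> \<delta> \<and> m mod q = c}"
    show "(-1) ^ (\<delta> - m) * int (\<delta> choose (\<delta> - m)) = (-1) ^ (\<delta> - m) * int (\<delta> choose m)"
      using m binomial_symmetric[of m \<delta>] by simp
  qed
  finally show ?thesis by simp
qed

definition Q :: "nat \<Rightarrow> nat \<Rightarrow> nat \<Rightarrow> int \<Rightarrow> int" where
  "Q q d c X = (\<Sum>\<delta>\<in>{0..d}. int_binom X \<delta> * comono \<delta> (int \<delta> - int c) q)"

lemma Q_newt: "c < q \<Longrightarrow> Q q d c X = (\<Sum>\<delta>\<le>d. int_binom X \<delta> * newt (gind q c) \<delta>)"
  unfolding Q_def by (simp add: comono_newt atLeast0AtMost)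

lemma Q_interp:
  assumes c: "c < q" and y: "y < q" and d: "q \<le> d + 1"
  shows "Q q d c (int y) = (if y = c then 1 else 0)"
proof -
  have "Q q d c (int y) = (\<Sum>\<delta>\<le>d. int (y choose \<delta>) * newt (gind q c) \<delta>)"
    using Q_newt[OF c] by (simp add: int_binom_nat)
  also have "\<dots> = (\<Sum>\<delta>\<le>y. int (y choose \<delta>) * newt (gind q c) \<delta>)"
    by (rule sum.mono_neutral_right) (use y d in auto)
  also have "\<dots> = gind q c y" by (rule newton[symmetric])
  also have "\<dots> = (if y = c then 1 else 0)" using y unfolding gind_def by simp
  finally show ?thesis .
qed




context
  fixes p \<alpha> \<beta> :: nat
  assumes p: "prime p" and a: "\<alpha> \<ge> 1" and b: "\<beta> \<ge> 1"
begin

lemma Q_nat_cong: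
  assumes c: "c < p ^ \<alpha>"
    and d: "d = p ^ \<alpha> - 1 + (\<beta> - 1) * (p - 1) * p ^ (\<alpha> - 1)"
  shows "[Q (p ^ \<alpha>) d c (int y) = gind (p ^ \<alpha>) c y] (mod int p ^ \<beta>)"
proof -
  let ?q = "p ^ \<alpha>"
  let ?a = "newt (gind ?q c)"
  have q1: "?q \<ge> 1" using prime_gt_0_nat[OF p] by (simp add: Suc_le_eq)
  have dd: "p ^ \<alpha> + (\<beta> - 1) * ((p - 1) * p ^ (\<alpha> - 1)) = d + 1"
    using q1 unfolding d by (simp add: mult.assoc)
  have "gind ?q c y = (\<Sum>\<delta>\<le>y. int (y choose \<delta>) * ?a \<delta>)" by (rule newton)
  also have "\<dots> = (\<Sum>\<delta>\<le>y + d. int (y choose \<delta>) * ?a \<delta>)"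
    by (rule sum.mono_neutral_left) auto
  also have "{..y + d} = {..d} \<union> {d<..y + d}" by auto
  also have "(\<Sum>\<delta>\<in>{..d} \<union> {d<..y + d}. int (y choose \<delta>) * ?a \<delta>)
     = (\<Sum>\<delta>\<le>d. int (y choose \<delta>) * ?a \<delta>) + (\<Sum>\<delta>\<in>{d<..y + d}. int (y choose \<delta>) * ?a \<delta>)"
    by (rule sum.union_disjoint) auto
  finally have eq: "gind ?q c y = Q ?q d c (int y) + (\<Sum>\<delta>\<in>{d<..y + d}. int (y choose \<delta>) * ?a \<delta>)"
    using Q_newt[OF c] by (simp add: int_binom_nat)
  have "int p ^ \<beta> dvd (\<Sum>\<delta>\<in>{d<..y + d}. int (y choose \<delta>) * ?a \<delta>)"
  proof (rule dvd_sum)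
    fix \<delta> assume "\<delta> \<in> {d<..y + d}"
    then have "\<delta> \<ge> p ^ \<alpha> + (\<beta> - 1) * ((p - 1) * p ^ (\<alpha> - 1))" unfolding dd by simp
    then have "int p ^ Suc (\<beta> - 1) dvd ?a \<delta>"
      by (rule weis[OF p a]) (rule gind_per)
    then show "int p ^ \<beta> dvd int (y choose \<delta>) * ?a \<delta>" using b by simp
  qed
  then show ?thesis unfolding eq cong_iff_dvd_diff by simp
qed

lemma Q_periodic:
  assumes c: "c < p ^ \<alpha>"
    and d: "d = p ^ \<alpha> - 1 + (\<beta> - 1) * (p - 1) * p ^ (\<alpha> - 1)"
  shows "[Q (p ^ \<alpha>) d c (X + int (p ^ \<alpha>)) = Q (p ^ \<alpha>) d c X] (mod int p ^ \<beta>)"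
proof -
  let ?q = "p ^ \<alpha>"
  let ?r = "int p ^ \<beta>"
  have shiftQ: "[Q ?q d c (Z + ?r * fact d * K) = Q ?q d c Z] (mod ?r)" for Z K
    unfolding Q_def
  proof (intro cong_sum cong_mult cong_refl int_binom_shift)
    fix \<delta> assume "\<delta> \<in> {0..d}"
    then have "fact \<delta> dvd (fact d :: int)" by (simp add: fact_dvd)
    then show "?r * fact \<delta> dvd ?r * fact d * K" by (simp add: mult.assoc mult_dvd_mono)
  qed
  have r1: "?r * fact d \<ge> 1"
  proof -
    have "int p \<ge> 1" using prime_gt_0_nat[OF p] by simp
    then have "?r \<ge> 1" by (rule one_le_power)
    moreover have "(fact d :: int) \<ge> 1" by simp
    ultimately show ?thesis using mult_mono[of 1 ?r 1 "fact d"] by simp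
  qed
  define M where "M = ?r * fact d * \<bar>X\<bar>"
  have "M \<ge> \<bar>X\<bar>" unfolding M_def using mult_right_mono[OF r1 abs_ge_zero[of X]] by simp
  then have XM: "X + M \<ge> 0" by simp
  define Y where "Y = nat (X + M)"
  have Y: "int Y = X + M" using XM unfolding Y_def by simp
  have "[Q ?q d c (X + int ?q) = Q ?q d c (X + int ?q + M)] (mod ?r)"
    unfolding M_def using shiftQ cong_sym by blast
  also have "X + int ?q + M = int (Y + ?q)" using Y by simp
  also have "[Q ?q d c (int (Y + ?q)) = gind ?q c (Y + ?q)] (mod ?r)"
    by (rule Q_nat_cong[OF c d])
  also have "gind ?q c (Y + ?q) = gind ?q c Y" by (rule gind_per)
  also have "[gind ?q c Y = Q ?q d c (int Y)] (mod ?r)"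
    by (rule cong_sym, rule Q_nat_cong[OF c d])
  also have "Q ?q d c (int Y) = Q ?q d c (X + M)" using Y by simp
  also have "[Q ?q d c (X + M) = Q ?q d c X] (mod ?r)"
    unfolding M_def by (rule shiftQ)
  finally show ?thesis .
qed

end




definition Pint :: "nat \<Rightarrow> nat \<Rightarrow> (nat \<Rightarrow> nat) \<Rightarrow> (nat \<Rightarrow> nat) \<Rightarrow> ((nat \<Rightarrow> nat) \<Rightarrow> int) \<Rightarrow> (nat \<Rightarrow> int) \<Rightarrow> int" where
  "Pint p n \<alpha> d f X = (\<Sum>x\<in>PiE {..<n} (\<lambda>j. {..<p ^ \<alpha> j}). f x * (\<Prod>j<n. Q (p ^ \<alpha> j) (d j) (x j) (X j)))"

lemma P_Pint:
  "[polyfract_eval n d (interp_coef p \<alpha> \<beta> n f) X = Pint p n \<alpha> d f X] (mod int p ^ \<beta>)"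
proof -
  let ?B = "PiE {..<n} (\<lambda>j. {..<p ^ \<alpha> j})"
  let ?D = "PiE {..<n} (\<lambda>j. {0..d j})"
  let ?A = "\<lambda>\<delta>. \<Prod>j<n. int_binom (X j) (\<delta> j)"
  let ?C = "\<lambda>\<delta> x. \<Prod>j<n. comono (\<delta> j) (int (\<delta> j) - int (x j)) (p ^ \<alpha> j)"
  have "[polyfract_eval n d (interp_coef p \<alpha> \<beta> n f) X = (\<Sum>\<delta>\<in>?D. ?A \<delta> * (\<Sum>x\<in>?B. ?C \<delta> x * f x))] (mod int p ^ \<beta>)"
    unfolding polyfract_eval_def interp_coef_def
    by (intro cong_sum cong_mult cong_refl) (simp add: cong_mod_left)
  also have "(\<Sum>\<delta>\<in>?D. ?A \<delta> * (\<Sum>x\<in>?B. ?C \<delta> x * f x)) = (\<Sum>\<delta>\<in>?D. \<Sum>x\<in>?B. f x * (?A \<delta> * ?C \<delta> x))"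
    by (simp add: sum_distrib_left ac_simps)
  also have "\<dots> = (\<Sum>x\<in>?B. \<Sum>\<delta>\<in>?D. f x * (?A \<delta> * ?C \<delta> x))" by (rule sum.swap)
  also have "\<dots> = (\<Sum>x\<in>?B. f x * (\<Sum>\<delta>\<in>?D. \<Prod>j<n. int_binom (X j) (\<delta> j) * comono (\<delta> j) (int (\<delta> j) - int (x j)) (p ^ \<alpha> j)))"
    by (simp add: sum_distrib_left prod.distrib)
  also have "\<dots> = Pint p n \<alpha> d f X"
    unfolding Pint_def Q_def
    by (intro sum.cong refl arg_cong[where f = "\<lambda>t. _ * t"]) (simp add: prod_sum_PiE)
  finally show ?thesis .
qed

lemma Pint_periodic:
  assumes p: "prime p" and a: "\<forall>j<n. \<alpha> j \<ge> 1" and b: "\<beta> \<ge> 1"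
    and d: "d = (\<lambda>j. p ^ \<alpha> j - 1 + (\<beta> - 1) * (p - 1) * p ^ (\<alpha> j - 1))"
    and j0: "j0 < n"
  shows "[Pint p n \<alpha> d f (X(j0 := X j0 + int (p ^ \<alpha> j0))) = Pint p n \<alpha> d f X] (mod int p ^ \<beta>)"
  unfolding Pint_def
proof (intro cong_sum cong_mult cong_refl cong_prod)
  fix x j assume x: "x \<in> PiE {..<n} (\<lambda>j. {..<p ^ \<alpha> j})" and j: "j \<in> {..<n}"
  show "[Q (p ^ \<alpha> j) (d j) (x j) ((X(j0 := X j0 + int (p ^ \<alpha> j0))) j) = Q (p ^ \<alpha> j) (d j) (x j) (X j)] (mod int p ^ \<beta>)"
  proof (cases "j = j0")
    case True
    have aj: "\<alpha> j \<ge> 1" using a j by auto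
    have "x j < p ^ \<alpha> j" using x j by (auto simp: PiE_def Pi_def)
    then show ?thesis using Q_periodic[OF p aj b, of "x j" "d j" "X j"] True d by simp
  next
    case False then show ?thesis by simp
  qed
qed

lemma Pint_interp:
  assumes p: "prime p"
    and d: "d = (\<lambda>j. p ^ \<alpha> j - 1 + (\<beta> - 1) * (p - 1) * p ^ (\<alpha> j - 1))"
    and x0: "x0 \<in> PiE {..<n} (\<lambda>j. {..<p ^ \<alpha> j})"
  shows "Pint p n \<alpha> d f (\<lambda>j. int (x0 j)) = f x0"
proof -
  let ?B = "PiE {..<n} (\<lambda>j. {..<p ^ \<alpha> j})"
  have "Pint p n \<alpha> d f (\<lambda>j. int (x0 j)) = (\<Sum>x\<in>?B. if x = x0 then f x else 0)"
    unfolding Pint_def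
  proof (rule sum.cong[OF refl])
    fix x assume x: "x \<in> ?B"
    have "(\<Prod>j<n. Q (p ^ \<alpha> j) (d j) (x j) (int (x0 j))) = (\<Prod>j<n. if x0 j = x j then 1 else 0)"
    proof (rule prod.cong[OF refl])
      fix j assume j: "j \<in> {..<n}"
      have "x j < p ^ \<alpha> j" "x0 j < p ^ \<alpha> j" using x x0 j by (auto simp: PiE_def Pi_def)
      moreover have "p ^ \<alpha> j \<le> d j + 1" unfolding d by simp
      ultimately show "Q (p ^ \<alpha> j) (d j) (x j) (int (x0 j)) = (if x0 j = x j then 1 else 0)"
        by (rule Q_interp)
    qed
    also have "\<dots> = (if x = x0 then 1 else 0)"
    proof (cases "x = x0")
      case True then show ?thesis by simp
    next
      case False
      then obtain j where "j < n" "x j \<noteq> x0 j" using x x0 by (metis PiE_ext lessThan_iff)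
      then have "(\<Prod>j<n. if x0 j = x j then 1 else (0::int)) = 0"
        by (intro prod_zero) (auto intro!: bexI[of _ j])
      then show ?thesis using False by simp
    qed
    finally show "f x * (\<Prod>j<n. Q (p ^ \<alpha> j) (d j) (x j) (int (x0 j))) = (if x = x0 then f x else 0)"
      by simp
  qed
  also have "\<dots> = f x0" using x0 by (simp add: sum.delta sum.delta' finite_PiE)
  finally show ?thesis .
qed

theorem theorem3p8:
  fixes p n \<beta> :: nat and \<alpha> :: "nat \<Rightarrow> nat" and f :: "(nat \<Rightarrow> nat) \<Rightarrow> int"
    and d :: "nat \<Rightarrow> nat" and P :: "(nat \<Rightarrow> int) \<Rightarrow> int"
  assumes "prime p" and "\<forall>j<n. \<alpha> j \<ge> 1" and "\<beta> \<ge> 1"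
    and "d = (\<lambda>j. p ^ \<alpha> j - 1 + (\<beta> - 1) * (p - 1) * p ^ (\<alpha> j - 1))"
    and "P = polyfract_eval n d (interp_coef p \<alpha> \<beta> n f)"
  shows "(\<forall>x :: nat \<Rightarrow> int. \<forall>j<n. [P (x(j := x j + int (p ^ \<alpha> j))) = P x] (mod (int p ^ \<beta>)))
       \<and> (\<forall>x\<in>PiE {..<n} (\<lambda>j. {..<p ^ \<alpha> j}). [P (\<lambda>j. int (x j)) = f x] (mod (int p ^ \<beta>)))"
proof (intro conjI allI impI ballI)
  fix X :: "nat \<Rightarrow> int" and j assume j: "j < n"
  have "[P (X(j := X j + int (p ^ \<alpha> j))) = Pint p n \<alpha> d f (X(j := X j + int (p ^ \<alpha> j)))] (mod int p ^ \<beta>)"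
    unfolding assms(5) by (rule P_Pint)
  also have "[Pint p n \<alpha> d f (X(j := X j + int (p ^ \<alpha> j))) = Pint p n \<alpha> d f X] (mod int p ^ \<beta>)"
    by (rule Pint_periodic[OF assms(1-4) j])
  also have "[Pint p n \<alpha> d f X = P X] (mod int p ^ \<beta>)"
    unfolding assms(5) by (rule cong_sym, rule P_Pint)
  finally show "[P (X(j := X j + int (p ^ \<alpha> j))) = P X] (mod int p ^ \<beta>)" .
next
  fix x assume x: "x \<in> PiE {..<n} (\<lambda>j. {..<p ^ \<alpha> j})"
  have "[P (\<lambda>j. int (x j)) = Pint p n \<alpha> d f (\<lambda>j. int (x j))] (mod int p ^ \<beta>)"
    unfolding assms(5) by (rule P_Pint)
  also have "Pint p n \<alpha> d f (\<lambda>j. int (x j)) = f x"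
    by (rule Pint_interp[OF assms(1) assms(4) x])
  finally show "[P (\<lambda>j. int (x j)) = f x] (mod int p ^ \<beta>)" .
qed


end
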